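(* Let $d\geq 2$ be an integer. For integers $a \le b$ write $[[a,b]] = \{a,a+1,\ldots,b\}$. Let $(R_m)_{m \geq 0}$ be a sequence of boxes $R_m = [[0,x_{1,m}]] \times \cdots \times [[0,x_{d,m}]] \subset \mathbb{Z}^d$ with $R_0 = \{(0,\ldots,0)\}$ (i.e. $x_{k,0}=0$ for all $k$), such that for every $m \geq 1$ and every $k \in \{1,\ldots,d\}$ one has $x_{k,m} \geq x_{k,m-1}$, with strict inequality if and only if $k \equiv m \pmod d$. For $m \geq 1$ let $s(m) \in \{1,\ldots,d\}$ be the residue class of $m$ modulo $d$. A (complete) line in $R_m$ in the $s(m)$-direction is a set of the form $\{(i_1,\ldots,i_{s(m)-1}, j, i_{s(m)+1},\ldots,i_d) : j \in [[0,x_{s(m),m}]]\}$ with $i_r \in [[0,x_{r,m}]]$ fixed for $r \neq s(m)$. For each $m \geq 1$ let $A_m > 1$ and let $\mathcal{L}(m)$ be a set of complete lines in $R_m$ in the $s(m)$-direction whose cardinality is at least $(1 - 1/A_m)$ times the number of all complete lines in $R_m$ in the $s(m)$-direction. If $M_0 \in \mathbb{N}$ satisfies $\sum_{m=1}^{M_0} 1/A_m < 1$, then there exists a sequence of lines $L_m \in \mathcal{L}(m)$, $m \in \{1,\ldots,M_0\}$, such that $L_{m+1} \cap L_m \neq \emptyset$ for every $m \in \{1,\ldots,M_0-1\}$. *)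

theory Defs
  imports Complex_Main
begin

text \<open>Points of Z^d are represented as functions nat => int, with coordinates
  indexed by 1..d and value 0 outside 1..d.\<close>

definition box :: "nat \<Rightarrow> (nat \<Rightarrow> nat \<Rightarrow> int) \<Rightarrow> nat \<Rightarrow> (nat \<Rightarrow> int) set" where
  "box d x m = {p. (\<forall>k\<in>{1..d}. 0 \<le> p k \<and> p k \<le> x k m) \<and> (\<forall>k. k \<notin> {1..d} \<longrightarrow> p k = 0)}"

definition sdir :: "nat \<Rightarrow> nat \<Rightarrow> nat" where
  "sdir d m = (if m mod d = 0 then d else m mod d)"

definition line_through :: "nat \<Rightarrow> (nat \<Rightarrow> nat \<Rightarrow> int) \<Rightarrow> nat \<Rightarrow> (nat \<Rightarrow> int) \<Rightarrow> (nat \<Rightarrow> int) set" where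
  "line_through d x m p = {p(sdir d m := j) | j. j \<in> {0..x (sdir d m) m}}"

definition lines :: "nat \<Rightarrow> (nat \<Rightarrow> nat \<Rightarrow> int) \<Rightarrow> nat \<Rightarrow> (nat \<Rightarrow> int) set set" where
  "lines d x m = line_through d x m ` box d x m"

end

theory Submission
  imports Defs "HOL-Library.FuncSet"
begin

definition seg :: "nat \<Rightarrow> int \<Rightarrow> (nat\<Rightarrow>int) \<Rightarrow> (nat\<Rightarrow>int) set" where
  "seg s c p = {p(s:=j) | j. j \<in> {0..c}}"

lemma seg_eq_image: "seg s c p = (\<lambda>j. p(s:=j)) ` {0..c}" by (auto simp: seg_def)
lemma seg_reset[simp]: "seg s c (p(s:=a)) = seg s c p" by (simp add: seg_def)
lemma finite_seg[simp]: "finite (seg s c p)" by (simp add: seg_eq_image)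
lemma card_seg: "card (seg s c p) = nat (c+1)"
proof -
  have "inj_on (\<lambda>j. p(s:=j)) {0..c}" by (rule inj_onI) (metis fun_upd_same)
  then show ?thesis by (simp add: seg_eq_image card_image)
qed
lemma mem_seg: "0 \<le> p s \<Longrightarrow> p s \<le> c \<Longrightarrow> p \<in> seg s c p"
  unfolding seg_def by (rule CollectI, rule exI[of _ "p s"]) auto
lemma seg_mono: "c \<le> c' \<Longrightarrow> seg s c p \<subseteq> seg s c' p" by (auto simp: seg_def)
lemma seg_disj: "q s = 0 \<Longrightarrow> q' s = 0 \<Longrightarrow> q \<noteq> q' \<Longrightarrow> seg s c q \<inter> seg s c' q' = {}"
proof (rule ccontr)
  assume a: "q s = 0" "q' s = 0" "q \<noteq> q'" "seg s c q \<inter> seg s c' q' \<noteq> {}"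
  then obtain j j' where "q(s:=j) = q'(s:=j')" by (auto simp: seg_def)
  hence "(q(s:=j))(s:=0) = (q'(s:=j'))(s:=0)" by simp
  hence "q(s:=0) = q'(s:=0)" by simp
  with a show False by (metis fun_upd_triv)
qed
lemma seg_inj: "q s = 0 \<Longrightarrow> q' s = 0 \<Longrightarrow> 0 \<le> c \<Longrightarrow> seg s c q = seg s c q' \<Longrightarrow> q = q'"
proof (rule ccontr)
  assume a: "q s = 0" "q' s = 0" "0 \<le> c" "seg s c q = seg s c q'" "q \<noteq> q'"
  have "q \<in> seg s c q" using a by (intro mem_seg) auto
  moreover have "seg s c q \<inter> seg s c q' = {}" using seg_disj[of q s q' c c] a by simp
  ultimately show False using a(4) by auto
qed
lemma card_UN_seg: "finite Z \<Longrightarrow> \<forall>q\<in>Z. q s = 0 \<Longrightarrow> card (\<Union>q\<in>Z. seg s c q) = card Z * nat (c+1)"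
proof -
  assume f: "finite Z" and z: "\<forall>q\<in>Z. q s = 0"
  have "card (\<Union>q\<in>Z. seg s c q) = (\<Sum>q\<in>Z. card (seg s c q))"
  proof (rule card_UN_disjoint[OF f])
    show "\<forall>i\<in>Z. finite (seg s c i)" by simp
    show "\<forall>i\<in>Z. \<forall>j\<in>Z. i \<noteq> j \<longrightarrow> seg s c i \<inter> seg s c j = {}"
      using z seg_disj by blast
  qed
  thus ?thesis by (simp add: card_seg)
qed

lemma box_seg: assumes "s \<in> {1..d}"
  shows "box d x m = (\<Union>q\<in>{q\<in>box d x m. q s = 0}. seg s (x s m) q)"
proof
  show "box d x m \<subseteq> (\<Union>q\<in>{q\<in>box d x m. q s = 0}. seg s (x s m) q)"
  proof
    fix p assume p: "p \<in> box d x m"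
    have "0 \<le> x s m" using p assms unfolding box_def by fastforce
    hence "p(s:=0) \<in> box d x m" using p assms by (auto simp: box_def)
    moreover have "p \<in> seg s (x s m) (p(s:=0))" using p assms mem_seg[of p s "x s m"] by (auto simp: box_def)
    ultimately show "p \<in> (\<Union>q\<in>{q\<in>box d x m. q s = 0}. seg s (x s m) q)" by auto
  qed
  show "(\<Union>q\<in>{q\<in>box d x m. q s = 0}. seg s (x s m) q) \<subseteq> box d x m"
    using assms by (auto simp: seg_def box_def)
qed

lemma finite_box: "finite (box d x m)"
proof -
  have "box d x m \<subseteq> (\<lambda>f k. if k \<in> {1..d} then f k else 0) ` (PiE {1..d} (\<lambda>k. {0..x k m}))"
  proof
    fix p assume p: "p \<in> box d x m"
    let ?f = "restrict p {1..d}"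
    have "?f \<in> PiE {1..d} (\<lambda>k. {0..x k m})" using p by (auto simp: box_def)
    moreover have "p = (\<lambda>k. if k \<in> {1..d} then ?f k else 0)" using p by (auto simp: box_def fun_eq_iff)
    ultimately show "p \<in> (\<lambda>f k. if k \<in> {1..d} then f k else 0) ` (PiE {1..d} (\<lambda>k. {0..x k m}))" by blast
  qed
  moreover have "finite (PiE {1..d} (\<lambda>k. {0..x k m}))" by (rule finite_PiE) auto
  ultimately show ?thesis using finite_subset by blast
qed

lemma lines_seg: assumes "s = sdir d m" "s \<in> {1..d}"
  shows "lines d x m = seg s (x s m) ` {q\<in>box d x m. q s = 0}"
proof -
  have lt: "line_through d x m = seg s (x s m)" using assms(1) by (auto simp: fun_eq_iff line_through_def seg_def)
  show ?thesis unfolding lines_def lt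
  proof
    show "seg s (x s m) ` box d x m \<subseteq> seg s (x s m) ` {q \<in> box d x m. q s = 0}"
    proof
      fix l assume "l \<in> seg s (x s m) ` box d x m"
      then obtain p where p: "p \<in> box d x m" "l = seg s (x s m) p" by auto
      have "0 \<le> x s m" using p assms(2) unfolding box_def by fastforce
      hence "p(s:=0) \<in> {q \<in> box d x m. q s = 0}" using p assms(2) by (auto simp: box_def)
      moreover have "l = seg s (x s m) (p(s:=0))" using p by simp
      ultimately show "l \<in> seg s (x s m) ` {q \<in> box d x m. q s = 0}" by blast
    qed
  qed auto
qed

lemma count_bad:
  assumes s: "s \<in> {1..d}" and c: "0 \<le> x s m"
  shows "card {p \<in> box d x m. seg s (x s m) p \<notin> X} = card (seg s (x s m) ` {q \<in> box d x m. q s = 0} - X) * nat (x s m + 1)"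
proof -
  define Z where "Z = {q \<in> box d x m. q s = 0}"
  define c where "c = x s m"
  have fZ: "finite Z" using finite_box[of d x m] by (simp add: Z_def)
  have fZ': "finite {q\<in>Z. seg s c q \<notin> X}" using fZ by simp
  have eq: "{p \<in> box d x m. seg s c p \<notin> X} = (\<Union>q\<in>{q\<in>Z. seg s c q \<notin> X}. seg s c q)"
  proof
    show "{p \<in> box d x m. seg s c p \<notin> X} \<subseteq> (\<Union>q\<in>{q\<in>Z. seg s c q \<notin> X}. seg s c q)"
    proof
      fix p assume p: "p \<in> {p \<in> box d x m. seg s c p \<notin> X}"
      hence "p(s:=0) \<in> Z" using s c by (auto simp: box_def Z_def c_def)
      moreover have "p \<in> seg s c (p(s:=0))" using p s mem_seg[of p s c] by (auto simp: box_def c_def)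
      ultimately show "p \<in> (\<Union>q\<in>{q\<in>Z. seg s c q \<notin> X}. seg s c q)" using p by auto
    qed
    show "(\<Union>q\<in>{q\<in>Z. seg s c q \<notin> X}. seg s c q) \<subseteq> {p \<in> box d x m. seg s c p \<notin> X}"
    proof
      fix r assume "r \<in> (\<Union>q\<in>{q\<in>Z. seg s c q \<notin> X}. seg s c q)"
      then obtain q where q0: "q \<in> {q\<in>Z. seg s c q \<notin> X}" and q3: "r \<in> seg s c q" by (rule UN_E)
      hence q: "q \<in> Z" "seg s c q \<notin> X" "r \<in> seg s c q" by simp_all
      have "r \<in> (\<Union>q\<in>{q\<in>box d x m. q s = 0}. seg s (x s m) q)" using q by (auto simp: Z_def c_def)
      hence "r \<in> box d x m" by (subst box_seg[OF s])
      moreover obtain j where "r = q(s:=j)" using q(3) by (auto simp: seg_def)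
      hence "seg s c r = seg s c q" by simp
      ultimately show "r \<in> {p \<in> box d x m. seg s c p \<notin> X}" using q by auto
    qed
  qed
  have "card {p \<in> box d x m. seg s c p \<notin> X} = card {q\<in>Z. seg s c q \<notin> X} * nat (c+1)"
    unfolding eq by (rule card_UN_seg) (use fZ' in \<open>auto simp: Z_def\<close>)
  moreover have "card {q\<in>Z. seg s c q \<notin> X} = card (seg s c ` Z - X)"
  proof -
    have inj: "inj_on (seg s c) {q\<in>Z. seg s c q \<notin> X}"
      by (rule inj_onI) (use seg_inj c in \<open>auto simp: Z_def c_def\<close>)
    moreover have "seg s c ` {q\<in>Z. seg s c q \<notin> X} = seg s c ` Z - X" by auto
    have "card (seg s c ` {q\<in>Z. seg s c q \<notin> X}) = card {q\<in>Z. seg s c q \<notin> X}"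
      by (rule card_image[OF inj])
    thus ?thesis unfolding \<open>seg s c ` {q\<in>Z. seg s c q \<notin> X} = seg s c ` Z - X\<close> by simp
  qed
  ultimately show ?thesis by (simp add: Z_def c_def)
qed

lemma card_box: assumes s: "s \<in> {1..d}"
  shows "card (box d x m) = card {q\<in>box d x m. q s = 0} * nat (x s m + 1)"
proof -
  have f: "finite {q\<in>box d x m. q s = 0}" using finite_box[of d x m] by simp
  have "card (\<Union>q\<in>{q\<in>box d x m. q s = 0}. seg s (x s m) q) = card {q\<in>box d x m. q s = 0} * nat (x s m + 1)"
    by (rule card_UN_seg[OF f]) simp
  moreover have "card (box d x m) = card (\<Union>q\<in>{q\<in>box d x m. q s = 0}. seg s (x s m) q)"
    by (rule arg_cong[OF box_seg[OF s]])
  ultimately show ?thesis by (rule trans[rotated])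
qed

lemma sdir_facts: assumes "d \<ge> 2" "k \<in> {1..d}"
  shows "sdir d m \<in> {1..d}" "k mod d = m mod d \<longleftrightarrow> k = sdir d m"
proof -
  show "sdir d m \<in> {1..d}"
  proof (cases "m mod d = 0")
    case True thus ?thesis using assms unfolding sdir_def by simp
  next
    case False
    have "m mod d < d" using assms by simp
    thus ?thesis using False unfolding sdir_def by simp
  qed
  show "k mod d = m mod d \<longleftrightarrow> k = sdir d m"
  proof (cases "k = d")
    case True
    have "m mod d < d" using assms by simp
    thus ?thesis using True unfolding sdir_def by (cases "m mod d = 0") auto
  next
    case False
    hence "k mod d = k" using assms by auto
    have k1: "k \<ge> 1" using assms by simp
    show ?thesis
    proof (cases "m mod d = 0")
      case True
      thus ?thesis using \<open>k mod d = k\<close> k1 False unfolding sdir_def by simp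
    next
      case F2: False
      thus ?thesis using \<open>k mod d = k\<close> unfolding sdir_def by simp
    qed
  qed
qed

lemma x_nonneg:
  fixes x :: "nat \<Rightarrow> nat \<Rightarrow> int" and m :: nat
  assumes x0: "\<forall>k\<in>{1..d}. x k 0 = 0"
    and xmono: "\<forall>m\<ge>1. \<forall>k\<in>{1..d}. x k m \<ge> x k (m - 1)"
    and k: "k \<in> {1..d}"
  shows "0 \<le> x k m"
proof (induction m)
  case 0 thus ?case using x0 k by simp
next
  case (Suc m)
  have "x k (Suc m) \<ge> x k m" using xmono k by (metis diff_Suc_1 le_add1 plus_1_eq_Suc)
  thus ?case using Suc by linarith
qed

lemma bad_lines:
  fixes x :: "nat \<Rightarrow> nat \<Rightarrow> int" and m :: nat and a :: real
  assumes s: "s = sdir d m" "s \<in> {1..d}" and c: "0 \<le> x s m"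
    and Ls: "\<L> \<subseteq> lines d x m" and A: "a > 1"
    and Lc: "real (card \<L>) \<ge> (1 - 1 / a) * real (card (lines d x m))"
  shows "real (card {p \<in> box d x m. line_through d x m p \<notin> \<L>}) \<le> real (card (box d x m)) / a"
proof -
  define Z where "Z = {q \<in> box d x m. q s = 0}"
  define n where "n = nat (x s m + 1)"
  have lt: "line_through d x m = seg s (x s m)" using s(1) by (auto simp: fun_eq_iff line_through_def seg_def)
  have lz: "lines d x m = seg s (x s m) ` Z" unfolding Z_def by (rule lines_seg[OF s])
  have fZ: "finite Z" using finite_box[of d x m] by (simp add: Z_def)
  have inj: "inj_on (seg s (x s m)) Z"
    by (rule inj_onI) (use seg_inj c in \<open>auto simp: Z_def\<close>)
  have cl: "card (lines d x m) = card Z" unfolding lz by (rule card_image[OF inj])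
  have cb: "card (box d x m) = card Z * n" unfolding Z_def n_def by (rule card_box[OF s(2)])
  have fL: "finite (lines d x m)" unfolding lz using fZ by simp
  have fLL: "finite \<L>" using finite_subset[OF Ls fL] .
  have "card {p \<in> box d x m. line_through d x m p \<notin> \<L>} = card (lines d x m - \<L>) * n"
    unfolding lt lz n_def Z_def by (rule count_bad[of s d x m, OF s(2) c])
  also have "card (lines d x m - \<L>) = card (lines d x m) - card \<L>"
    by (rule card_Diff_subset[OF fLL Ls])
  finally have e: "card {p \<in> box d x m. line_through d x m p \<notin> \<L>} = (card (lines d x m) - card \<L>) * n" .
  have le: "card \<L> \<le> card (lines d x m)" by (rule card_mono[OF fL Ls])
  have "real (card (lines d x m) - card \<L>) \<le> real (card (lines d x m)) / a"
  proof -
    have "real (card (lines d x m) - card \<L>) = real (card (lines d x m)) - real (card \<L>)"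
      using le by (simp add: of_nat_diff)
    also have "\<dots> \<le> real (card (lines d x m)) - (1 - 1 / a) * real (card (lines d x m))" using Lc by linarith
    also have "\<dots> = real (card (lines d x m)) / a" by (simp add: algebra_simps)
    finally show ?thesis .
  qed
  hence "real (card (lines d x m) - card \<L>) * real n \<le> real (card (lines d x m)) / a * real n"
    by (rule mult_right_mono) simp
  also have "\<dots> = real (card (box d x m)) / a" unfolding cb cl by simp
  finally show ?thesis unfolding e by simp
qed

theorem lemma2p3:
  fixes d :: nat and x :: "nat \<Rightarrow> nat \<Rightarrow> int" and A :: "nat \<Rightarrow> real"
    and \<L> :: "nat \<Rightarrow> (nat \<Rightarrow> int) set set" and M0 :: nat
  assumes d2: "d \<ge> 2"
    and x0: "\<forall>k\<in>{1..d}. x k 0 = 0"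
    and xmono: "\<forall>m\<ge>1. \<forall>k\<in>{1..d}. x k m \<ge> x k (m - 1)"
    and xstrict: "\<forall>m\<ge>1. \<forall>k\<in>{1..d}. (x k m > x k (m - 1) \<longleftrightarrow> k mod d = m mod d)"
    and A1: "\<forall>m\<ge>1. A m > 1"
    and Lsub: "\<forall>m\<ge>1. \<L> m \<subseteq> lines d x m"
    and Lcard: "\<forall>m\<ge>1. real (card (\<L> m)) \<ge> (1 - 1 / A m) * real (card (lines d x m))"
    and sumA: "(\<Sum>m=1..M0. 1 / A m) < 1"
  shows "\<exists>L :: nat \<Rightarrow> (nat \<Rightarrow> int) set.
           (\<forall>m\<in>{1..M0}. L m \<in> \<L> m) \<and>
           (\<forall>m\<in>{1..M0 - 1}. L (m + 1) \<inter> L m \<noteq> {})"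
proof (cases "M0 = 0")
  case True thus ?thesis by auto
next
  case False
  define S where "S m = sdir d m" for m
  have Sd: "S m \<in> {1..d}" for m unfolding S_def by (rule sdir_facts(1)[OF d2, of 1]) (use d2 in simp)
  have xnn: "0 \<le> x k m" if "k \<in> {1..d}" for k m by (rule x_nonneg[OF x0 xmono that])
  have xeq: "x k (Suc m) = x k m" if k: "k \<in> {1..d}" "k \<noteq> S (Suc m)" for k m
  proof -
    have "x k (Suc m) \<ge> x k m" using xmono k(1) by (metis diff_Suc_1 le_add1 plus_1_eq_Suc)
    moreover have "\<not> x k (Suc m) > x k m"
    proof
      assume "x k (Suc m) > x k m"
      hence "k mod d = Suc m mod d" using xstrict k(1) by (metis diff_Suc_1 le_add1 plus_1_eq_Suc)
      hence "k = S (Suc m)" using sdir_facts(2)[OF d2 k(1)] unfolding S_def by blast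
      thus False using k(2) by simp
    qed
    ultimately show ?thesis by simp
  qed
  have xle: "x k m \<le> x k (Suc m)" if "k \<in> {1..d}" for k m
    using xmono that by (metis diff_Suc_1 le_add1 plus_1_eq_Suc)
  have lt: "line_through d x m = seg (S m) (x (S m) m)" for m
    by (auto simp: fun_eq_iff line_through_def seg_def S_def)
  define G where "G m = {p \<in> box d x m. \<exists>L. (\<forall>i\<in>{1..m}. L i \<in> \<L> i) \<and>
      (\<forall>i\<in>{1..m-1}. L (i+1) \<inter> L i \<noteq> {}) \<and> p \<in> L m}" for m
  define \<beta> where "\<beta> m = (\<Sum>i=1..m. 1 / A i)" for m
  define U2 where "U2 m = {p \<in> box d x m. line_through d x m p \<notin> \<L> m}" for m
  have fb: "finite (box d x m)" for m by (rule finite_box)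
  have bl: "real (card (U2 m)) \<le> real (card (box d x m)) / A m" if "m \<ge> 1" for m
    unfolding U2_def
    by (rule bad_lines[of "S m" d m x, OF S_def Sd xnn[OF Sd]]) (use Lsub Lcard A1 that in auto)
  have pin: "p \<in> seg s (x s m) p" if "p \<in> box d x m" "s \<in> {1..d}" for p s m
    using that by (intro mem_seg) (auto simp: box_def)
  have claim: "m \<le> M0 \<longrightarrow> real (card (box d x m - G m)) \<le> \<beta> m * real (card (box d x m))"
    if "m \<ge> 1" for m
    using that
  proof (induction m rule: nat_induct_at_least)
    case base
    have "box d x 1 - G 1 \<subseteq> U2 1"
    proof
      fix p assume p: "p \<in> box d x 1 - G 1"
      show "p \<in> U2 1"
      proof (rule ccontr)
        assume "p \<notin> U2 1"
        hence lp: "line_through d x 1 p \<in> \<L> 1" using p by (auto simp: U2_def)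
        have "p \<in> line_through d x 1 p" unfolding lt using pin p Sd by blast
        hence "p \<in> G 1" using p lp unfolding G_def
          by (intro CollectI conjI exI[of _ "\<lambda>_. line_through d x 1 p"]) auto
        thus False using p by simp
      qed
    qed
    hence "card (box d x 1 - G 1) \<le> card (U2 1)" by (intro card_mono) (auto simp: U2_def fb)
    hence "real (card (box d x 1 - G 1)) \<le> real (card (box d x 1)) / A 1" using bl[of 1] by linarith
    thus ?case by (simp add: \<beta>_def)
  next
    case (Suc m)
    show ?case
    proof
      assume mM: "Suc m \<le> M0"
      hence IH: "real (card (box d x m - G m)) \<le> \<beta> m * real (card (box d x m))" using Suc by simp
      define s where "s = S (Suc m)"
      define c where "c = x s m"
      define c' where "c' = x s (Suc m)"
      have s: "s \<in> {1..d}" unfolding s_def by (rule Sd)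
      have c0: "0 \<le> c" unfolding c_def by (rule xnn[OF s])
      have cc': "c \<le> c'" unfolding c_def c'_def by (rule xle[OF s])
      define Z where "Z = {q \<in> box d x m. q s = 0}"
      have eqx: "(0 \<le> q k \<and> q k \<le> x k (Suc m)) \<longleftrightarrow> (0 \<le> q k \<and> q k \<le> x k m)"
        if "k \<in> {1..d}" "q s = 0" for k and q :: "nat \<Rightarrow> int"
      proof (cases "k = s")
        case True thus ?thesis using that xnn[OF s, of m] xnn[OF s, of "Suc m"] by simp
      next
        case False thus ?thesis using xeq[OF that(1)] s_def by simp
      qed
      have beq: "q \<in> box d x (Suc m) \<longleftrightarrow> q \<in> box d x m" if "q s = 0" for q
        unfolding box_def using eqx[of _ q, OF _ that] by blast
      have Zeq: "{q \<in> box d x (Suc m). q s = 0} = Z"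
        unfolding Z_def using beq by blast
      have fZ: "finite Z" using fb[of m] by (simp add: Z_def)
      have Z0: "\<forall>q\<in>Z. q s = 0" by (simp add: Z_def)
      define B where "B = box d x m - G m"
      define T where "T = {q \<in> Z. seg s c q \<subseteq> B}"
      have fT: "finite T" using fZ by (simp add: T_def)
      have T0: "\<forall>q\<in>T. q s = 0" by (simp add: T_def Z_def)
      have segZ: "seg s c q \<subseteq> box d x m" if "q \<in> Z" for q
      proof -
        have "seg s c q \<subseteq> (\<Union>q\<in>{q\<in>box d x m. q s = 0}. seg s (x s m) q)"
          using that by (auto simp: Z_def c_def)
        also have "\<dots> = box d x m" by (rule box_seg[OF s, symmetric])
        finally show ?thesis .
      qed
      have C1: "box d x (Suc m) - G (Suc m) \<subseteq> (\<Union>q\<in>T. seg s c' q) \<union> U2 (Suc m)"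
      proof
        fix p assume p: "p \<in> box d x (Suc m) - G (Suc m)"
        show "p \<in> (\<Union>q\<in>T. seg s c' q) \<union> U2 (Suc m)"
        proof (cases "p \<in> U2 (Suc m)")
          case True thus ?thesis by simp
        next
          case False
          hence lp: "line_through d x (Suc m) p \<in> \<L> (Suc m)" using p by (auto simp: U2_def)
          define q where "q = p(s:=0)"
          have "0 \<le> c'" unfolding c'_def by (rule xnn[OF s])
          hence "q \<in> {q \<in> box d x (Suc m). q s = 0}" using p s by (auto simp: q_def box_def c'_def)
          hence qZ: "q \<in> Z" using Zeq by simp
          have ps: "p \<in> seg s c' q" unfolding q_def seg_reset c'_def using pin p s by blast
          have lpq: "line_through d x (Suc m) p = seg s c' q"
            unfolding lt q_def seg_reset s_def c'_def ..
          have "q \<in> T"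
          proof (rule ccontr)
            assume "q \<notin> T"
            then obtain r where r: "r \<in> seg s c q" "r \<notin> B" using qZ by (auto simp: T_def)
            have rb: "r \<in> box d x m" using segZ[OF qZ] r(1) by blast
            hence "r \<in> G m" using r(2) by (simp add: B_def)
            then obtain L where L1: "\<forall>i\<in>{1..m}. L i \<in> \<L> i"
                and L2: "\<forall>i\<in>{1..m-1}. L (i+1) \<inter> L i \<noteq> {}" and L3: "r \<in> L m"
              unfolding G_def by blast
            define L' where "L' = L(Suc m := line_through d x (Suc m) p)"
            have "r \<in> line_through d x (Suc m) p" using r(1) seg_mono[OF cc'] lpq by blast
            have a1: "\<forall>i\<in>{1..Suc m}. L' i \<in> \<L> i"
              using L1 lp by (auto simp: L'_def le_Suc_eq)
            have a2: "\<forall>i\<in>{1..Suc m - 1}. L' (i+1) \<inter> L' i \<noteq> {}"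
            proof
              fix i assume i: "i \<in> {1..Suc m - 1}"
              show "L' (i+1) \<inter> L' i \<noteq> {}"
              proof (cases "i = m")
                case True
                thus ?thesis using L3 \<open>r \<in> line_through d x (Suc m) p\<close> by (auto simp: L'_def)
              next
                case False
                hence "i \<in> {1..m-1}" using i by auto
                thus ?thesis using L2 False i by (auto simp: L'_def)
              qed
            qed
            have a3: "p \<in> L' (Suc m)" using ps lpq by (simp add: L'_def)
            have "p \<in> G (Suc m)" unfolding G_def using p a1 a2 a3 by blast
            thus False using p by simp
          qed
          thus ?thesis using ps by blast
        qed
      qed
      have n0: "0 < nat (c+1)" using c0 by simp
      have cbm: "card (box d x m) = card Z * nat (c+1)"
        unfolding Z_def c_def by (rule card_box[OF s])
      have cbs: "card (box d x (Suc m)) = card Z * nat (c'+1)"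
        unfolding Zeq[symmetric] c'_def by (rule card_box[OF s])
      have U1c: "card (\<Union>q\<in>T. seg s c' q) = card T * nat (c'+1)" by (rule card_UN_seg[OF fT T0])
      have "card T * nat (c+1) = card (\<Union>q\<in>T. seg s c q)" by (rule card_UN_seg[OF fT T0, symmetric])
      also have "\<dots> \<le> card B"
        by (rule card_mono) (auto simp: B_def fb T_def)
      finally have TB: "real (card T) * real (nat (c+1)) \<le> real (card B)" by (metis of_nat_le_iff of_nat_mult)
      have "real (card T) * real (nat (c+1)) \<le> (\<beta> m * real (card Z)) * real (nat (c+1))"
        using TB IH unfolding B_def cbm by simp
      hence Tle: "real (card T) \<le> \<beta> m * real (card Z)" using n0 by simp
      have "real (card (box d x (Suc m) - G (Suc m))) \<le> real (card ((\<Union>q\<in>T. seg s c' q) \<union> U2 (Suc m)))"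
        by (intro of_nat_mono card_mono C1) (simp add: fT U2_def fb)
      also have "\<dots> \<le> real (card (\<Union>q\<in>T. seg s c' q)) + real (card (U2 (Suc m)))"
        using card_Un_le by (metis of_nat_add of_nat_mono)
      also have "\<dots> \<le> \<beta> m * real (card (box d x (Suc m))) + real (card (box d x (Suc m))) / A (Suc m)"
      proof -
        have "real (card (\<Union>q\<in>T. seg s c' q)) = real (card T) * real (nat (c'+1))" unfolding U1c by simp
        also have "\<dots> \<le> \<beta> m * real (card Z) * real (nat (c'+1))"
          by (rule mult_right_mono[OF Tle]) simp
        also have "\<dots> = \<beta> m * real (card (box d x (Suc m)))" unfolding cbs by simp
        finally show ?thesis using bl[of "Suc m"] by simp
      qed
      also have "\<dots> = \<beta> (Suc m) * real (card (box d x (Suc m)))"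
        by (simp add: \<beta>_def algebra_simps add_divide_distrib)
      finally show "real (card (box d x (Suc m) - G (Suc m))) \<le> \<beta> (Suc m) * real (card (box d x (Suc m)))" .
    qed
  qed
  have M1: "M0 \<ge> 1" using False by simp
  have main: "real (card (box d x M0 - G M0)) \<le> \<beta> M0 * real (card (box d x M0))"
    using claim[OF M1] by simp
  have "(\<lambda>_. 0) \<in> box d x M0" using xnn by (auto simp: box_def)
  hence pos: "0 < card (box d x M0)" using fb card_gt_0_iff by blast
  have "G M0 \<noteq> {}"
  proof
    assume "G M0 = {}"
    hence "real (card (box d x M0)) \<le> \<beta> M0 * real (card (box d x M0))" using main by simp
    moreover have "\<beta> M0 * real (card (box d x M0)) < real (card (box d x M0))"
      using sumA pos unfolding \<beta>_def by simp
    ultimately show False by simp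
  qed
  then obtain p where "p \<in> G M0" by blast
  thus ?thesis unfolding G_def by blast
qed

end
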